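(* Let $a,b\in GF(q)\setminus\{0\}$ and let $\mu\in GF(q)$ satisfy $\mu^2=\frac ba\neq1$. Let $\mathcal B^1_{(s,c)}\in\tau(a,b)$ and let $P$ be the point of $\mathcal B_a\cap\mathcal B^1_{(s,c)}$. Then the unique point of $\mathcal B_b\cap\mathcal B^1_{(s,c)}$ is either $\mu P$ or $-\mu P$.
   Context: Let $p$ be an odd prime, $m\ge1$, and $q=p^m$. $GF(q^2)$ denotes the quadratic extension of $GF(q)$, and for $z\in GF(q^2)$ we write $\bar z:=z^{q}$. The Miquelian Möbius plane $\mathbb M(q)$ has point set $GF(q^2)\cup\{\infty\}$ and circles of two types: for $s\in GF(q^2)$ and $c\in GF(q)\setminus\{0\}$, the circle of the first type $\mathcal B^1_{(s,c)}=\{z\in GF(q^2):(z-s)(\bar z-\bar s)=c\}$; for $s\in GF(q^2)\setminus\{0\}$ and $c\in GF(q)$, the circle of the second type $\mathcal B^2_{(s,c)}=\{z\in GF(q^2):\bar s z+s\bar z=c\}\cup\{\infty\}$. Two circles are called tangential if they have exactly one point in common. For $a\in GF(q)\setminus\{0\}$ put $\mathcal B_a:=\mathcal B^1_{(0,a)}$, and for $a,b\in GF(q)\setminus\{0\}$ let $\tau(a,b)$ be the set of circles tangential to both $\mathcal B_a$ and $\mathcal B_b$. *)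

theory Defs
  imports Main "HOL-Computational_Algebra.Primes"
begin

text \<open>GF(q^2) is modelled as a finite field type 'a with CARD('a) = q^2;
 conjugation is z^q, and GF(q) is the subfield of elements fixed by it.
 Points of the Moebius plane are 'a option, with None playing the role of infinity.\<close>

definition cnj :: "nat \<Rightarrow> 'a::field \<Rightarrow> 'a" where
  "cnj q z = z ^ q"

definition subF :: "nat \<Rightarrow> 'a::field set" where
  "subF q = {x. x ^ q = x}"

definition circle1 :: "nat \<Rightarrow> 'a::field \<Rightarrow> 'a \<Rightarrow> 'a option set" where
  "circle1 q s c = Some ` {z. (z - s) * (cnj q z - cnj q s) = c}"

definition circle2 :: "nat \<Rightarrow> 'a::field \<Rightarrow> 'a \<Rightarrow> 'a option set" where
  "circle2 q s c = insert None (Some ` {z. cnj q s * z + s * cnj q z = c})"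

definition is_circle :: "nat \<Rightarrow> 'a::field option set \<Rightarrow> bool" where
  "is_circle q C \<longleftrightarrow>
     (\<exists>s c. c \<in> subF q \<and> c \<noteq> 0 \<and> C = circle1 q s c) \<or>
     (\<exists>s c. s \<noteq> 0 \<and> c \<in> subF q \<and> C = circle2 q s c)"

definition tangential :: "'a set \<Rightarrow> 'a set \<Rightarrow> bool" where
  "tangential C D \<longleftrightarrow> (\<exists>!x. x \<in> C \<and> x \<in> D)"

definition Bcirc :: "nat \<Rightarrow> 'a::field \<Rightarrow> 'a option set" where
  "Bcirc q a = circle1 q 0 a"

definition tau :: "nat \<Rightarrow> 'a::field \<Rightarrow> 'a \<Rightarrow> 'a option set set" where
  "tau q a b = {C. is_circle q C \<and> tangential C (Bcirc q a) \<and> tangential C (Bcirc q b)}"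

end

theory Submission
  imports Defs
begin

lemma pow_card_same:
  fixes x :: "'a :: {finite,field}"
  shows "x ^ card (UNIV :: 'a set) = x"
proof (cases "x = 0")
  case False
  have "x * (\<Prod>y\<in>UNIV-{0}. x * y) = x * x ^ (card (UNIV :: 'a set) - 1) * \<Prod>(UNIV-{0})"
    by (simp add: prod.distrib mult_ac)
  also have "x * x ^ (card (UNIV :: 'a set) - 1) = x ^ Suc (card (UNIV :: 'a set) - 1)"
    by (subst power_Suc) auto
  also have "Suc (card (UNIV :: 'a set) - 1) = card (UNIV :: 'a set)"
    using finite_UNIV_card_ge_0[where ?'a = 'a] by simp
  also have "(\<Prod>y\<in>UNIV-{0}. x * y) = (\<Prod>y\<in>UNIV-{0}. y)"
    by (rule prod.reindex_bij_witness[of _ "\<lambda>y. y / x" "\<lambda>y. x * y"]) (use False in auto)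
  finally show ?thesis
    by simp
qed (use finite_UNIV_card_ge_0[where ?'a = 'a] in auto)

lemma reflect_eq:
  fixes s P :: "'a :: {finite,field}" and q :: nat
  assumes inv: "\<And>z::'a. (z ^ q) ^ q = z" and q: "q > 0"
    and s0: "s \<noteq> 0"
    and tg: "tangential (circle1 q s c) (Bcirc q a)"
    and P1: "P * P ^ q = a" and P2: "(P - s) * (P ^ q - s ^ q) = c"
  shows "s * P ^ q = s ^ q * P"
proof -
  have cs0: "s ^ q \<noteq> 0" using s0 by simp
  define P' where "P' = s * P ^ q / s ^ q"
  have cP': "P' ^ q = s ^ q * P / s"
    unfolding P'_def by (simp add: power_mult_distrib power_divide inv)
  have "P' * P' ^ q = a" unfolding cP' using P1 s0 cs0
    by (simp add: P'_def field_simps)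
  hence A: "Some P' \<in> Bcirc q a" using q
    by (auto simp: Bcirc_def circle1_def cnj_def)
  have e1: "P' - s = s * (P ^ q - s ^ q) / s ^ q" using cs0 by (simp add: P'_def field_simps)
  have e2: "P' ^ q - s ^ q = s ^ q * (P - s) / s" unfolding cP' using s0 by (simp add: field_simps)
  have "(P' - s) * (P' ^ q - s ^ q) = (P - s) * (P ^ q - s ^ q)"
    unfolding e1 e2 using s0 cs0 by (simp add: field_simps)
  hence "(P' - s) * (P' ^ q - s ^ q) = c" using P2 by simp
  hence B: "Some P' \<in> circle1 q s c"
    by (auto simp: circle1_def cnj_def)
  have A2: "Some P \<in> Bcirc q a" using P1 q
    by (auto simp: Bcirc_def circle1_def cnj_def)
  have B2: "Some P \<in> circle1 q s c" using P2
    by (auto simp: circle1_def cnj_def)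
  from tg A B A2 B2 have "Some P' = Some P" unfolding tangential_def by blast
  hence "P' = P" by simp
  thus ?thesis using cs0 by (simp add: P'_def field_simps)
qed

theorem mainTheorem4:
  fixes p m q :: nat and a b \<mu> s c P :: "'a::{finite,field}"
  assumes "prime p" and "odd p" and "m \<ge> 1" and "q = p ^ m"
    and "card (UNIV :: 'a set) = q ^ 2"
    and "a \<in> subF q" "a \<noteq> 0" "b \<in> subF q" "b \<noteq> 0"
    and "\<mu> \<in> subF q" "\<mu> ^ 2 = b / a" "b / a \<noteq> 1"
    and "c \<in> subF q" "c \<noteq> 0"
    and "circle1 q s c \<in> tau q a b"
    and "Some P \<in> Bcirc q a \<inter> circle1 q s c"
  shows "\<forall>Q. Some Q \<in> Bcirc q b \<inter> circle1 q s c \<longrightarrow> Q = \<mu> * P \<or> Q = - (\<mu> * P)"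
proof (intro allI impI)
  fix Q assume HQ: "Some Q \<in> Bcirc q b \<inter> circle1 q s c"
  have q: "q > 0" using assms(1,4) prime_gt_0_nat by simp
  have inv: "\<And>z::'a. (z ^ q) ^ q = z"
    by (metis assms(5) pow_card_same power_mult power2_eq_square)
  have tga: "tangential (circle1 q s c) (Bcirc q a)"
   and tgb: "tangential (circle1 q s c) (Bcirc q b)" using assms(15) by (auto simp: tau_def)
  have P1: "P * P ^ q = a" and P2: "(P - s) * (P ^ q - s ^ q) = c"
    using assms(16) q by (auto simp: Bcirc_def circle1_def cnj_def)
  have Q1: "Q * Q ^ q = b" and Q2: "(Q - s) * (Q ^ q - s ^ q) = c"
    using HQ q by (auto simp: Bcirc_def circle1_def cnj_def)
  show "Q = \<mu> * P \<or> Q = - (\<mu> * P)"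
  proof (cases "s = 0")
    case True
    then have "a = b" using P1 P2 Q1 Q2 q by (simp add: power_0_left)
    then show ?thesis using assms(7,12) by simp
  next
    case s0: False
    have eP: "s * P ^ q = s ^ q * P" by (rule reflect_eq[OF inv q s0 tga P1 P2])
    have eQ: "s * Q ^ q = s ^ q * Q" by (rule reflect_eq[OF inv q s0 tgb Q1 Q2])
    have P0: "P \<noteq> 0" using P1 assms(7) q by auto
    have cs0: "s ^ q \<noteq> 0" using s0 by simp
    define r where "r = Q / P"
    have Qr: "Q = r * P" using P0 by (simp add: r_def)
    have "r ^ q = Q ^ q / P ^ q" by (simp add: r_def power_divide)
    also have "\<dots> = (s ^ q * Q / s) / (s ^ q * P / s)"
      using eP eQ s0 by (metis nonzero_mult_div_cancel_left)
    also have "\<dots> = r" using s0 cs0 P0 by (simp add: r_def field_simps)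
    finally have rq: "r ^ q = r" .
    have "b = r * r * (P * P ^ q)" using Q1 Qr rq
      by (simp add: power_mult_distrib algebra_simps)
    hence "b = r * r * a" using P1 by simp
    hence "r ^ 2 = \<mu> ^ 2" using assms(7,11) by (simp add: field_simps power2_eq_square)
    hence "r = \<mu> \<or> r = - \<mu>" by (simp add: power2_eq_iff)
    thus ?thesis using Qr by auto
  qed
qed

end
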